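(* Let $G$ be an amenable group and let $A,B\subseteq G$ have positive Banach densities $d(A)=\alpha$ and $d(B)=\beta$. Then the product set $AB$ is piecewise $k$-syndetic with $k=\left\lfloor\frac{1}{\alpha\beta}\right\rfloor$; that is, there is $F\subseteq G$ with $|F|\le\frac1{\alpha\beta}$ such that $FAB$ is thick.
   Context: A finite $K\subseteq G$ is $(H,\varepsilon)$-invariant if $K\ne\emptyset$ and $|hK\triangle K|/|K|<\varepsilon$ for all $h\in H$; $G$ is amenable if such $K$ exist for every finite $H\subseteq G$ and $\varepsilon>0$. $d(A)$ is the supremum of all $\alpha$ such that for every finite $H$ and $\varepsilon>0$ there is an $(H,\varepsilon)$-invariant $K$ with $|A\cap K|/|K|\ge\alpha$. A set $T\subseteq G$ is thick if for every finite $H\subseteq G$ there is $x\in G$ with $Hx\subseteq T$. $S$ is piecewise $k$-syndetic if $FS$ is thick for some $F\subseteq G$ with $|F|\le k$. *)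

theory Defs
  imports Complex_Main
begin

text \<open>The group G is modelled as a type of class group_add (not necessarily
commutative); the group operation is written +.\<close>

definition lmul :: "'a::group_add set \<Rightarrow> 'a set \<Rightarrow> 'a set" where
  "lmul X Y = {x + y | x y. x \<in> X \<and> y \<in> Y}"

definition sym_diff :: "'a set \<Rightarrow> 'a set \<Rightarrow> 'a set" where
  "sym_diff X Y = (X - Y) \<union> (Y - X)"

definition invariant :: "'a::group_add set \<Rightarrow> real \<Rightarrow> 'a set \<Rightarrow> bool" where
  "invariant H \<epsilon> K \<longleftrightarrow> finite K \<and> K \<noteq> {} \<and>
     (\<forall>h\<in>H. real (card (sym_diff ((\<lambda>k. h + k) ` K) K)) / real (card K) < \<epsilon>)"

definition amenable :: "'a::group_add itself \<Rightarrow> bool" where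
  "amenable (_::'a itself) \<longleftrightarrow>
     (\<forall>H::'a set. finite H \<longrightarrow> (\<forall>\<epsilon>>0. \<exists>K. invariant H \<epsilon> K))"

definition banach_density :: "'a::group_add set \<Rightarrow> real" where
  "banach_density A = Sup {\<alpha>. \<forall>H. finite H \<longrightarrow> (\<forall>\<epsilon>>0. \<exists>K. invariant H \<epsilon> K \<and>
       real (card (A \<inter> K)) / real (card K) \<ge> \<alpha>)}"

definition thick :: "'a::group_add set \<Rightarrow> bool" where
  "thick T \<longleftrightarrow> (\<forall>H. finite H \<longrightarrow> (\<exists>x. (\<lambda>h. h + x) ` H \<subseteq> T))"

definition piecewise_syndetic :: "nat \<Rightarrow> 'a::group_add set \<Rightarrow> bool" where
  "piecewise_syndetic k S \<longleftrightarrow> (\<exists>F. finite F \<and> card F \<le> k \<and> thick (lmul F S))"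

end

theory Submission
  imports Defs
begin

lemma inv_mono: "invariant H' e' K \<Longrightarrow> H \<subseteq> H' \<Longrightarrow> e' \<le> e \<Longrightarrow> invariant H e K"
  unfolding invariant_def by (meson less_le_trans subsetD)

lemma inv_card_pos: "invariant H e K \<Longrightarrow> finite K \<and> card K > 0"
  unfolding invariant_def by (simp add: card_gt_0_iff)

lemma inv_out:
  assumes "invariant H e K" "h \<in> H"
  shows "real (card ((\<lambda>k. h+k)`K - K)) < e * real (card K)"
    and "real (card (K - (\<lambda>k. h+k)`K)) < e * real (card K)"
proof -
  have fin: "finite K" "card K > 0" using assms(1) by (auto simp: invariant_def card_gt_0_iff)
  have "real (card (sym_diff ((\<lambda>k. h+k)`K) K)) / real (card K) < e"
    using assms unfolding invariant_def by blast
  hence S: "real (card (sym_diff ((\<lambda>k. h+k)`K) K)) < e * real (card K)"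
    using fin by (simp add: divide_less_eq)
  have "card ((\<lambda>k. h+k)`K - K) \<le> card (sym_diff ((\<lambda>k. h+k)`K) K)"
    by (rule card_mono) (auto simp: sym_diff_def fin)
  then show "real (card ((\<lambda>k. h+k)`K - K)) < e * real (card K)" using S by linarith
  have "card (K - (\<lambda>k. h+k)`K) \<le> card (sym_diff ((\<lambda>k. h+k)`K) K)"
    by (rule card_mono) (auto simp: sym_diff_def fin)
  then show "real (card (K - (\<lambda>k. h+k)`K)) < e * real (card K)" using S by linarith
qed

lemma dens:
  fixes A :: "'a::group_add set"
  assumes am: "amenable TYPE('a)" and fH: "finite H" and e: "\<epsilon> > 0" and d: "\<delta> > 0"
  shows "\<exists>K. invariant H \<epsilon> K \<and> real (card (A \<inter> K)) \<ge> (banach_density A - \<delta>) * real (card K)"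
proof -
  define S where "S = {\<alpha>. \<forall>H. finite H \<longrightarrow> (\<forall>\<epsilon>>0. \<exists>K. invariant H \<epsilon> K \<and>
       real (card (A \<inter> K)) / real (card K) \<ge> \<alpha>)}"
  have bd: "banach_density A = Sup S" unfolding banach_density_def S_def by simp
  have "0 \<in> S" using am unfolding S_def amenable_def by auto
  hence ne: "S \<noteq> {}" by auto
  have "banach_density A - \<delta> < Sup S" using bd d by simp
  then obtain \<gamma> where g: "\<gamma> \<in> S" "banach_density A - \<delta> < \<gamma>" using less_cSupE[OF _ ne] by blast
  then obtain K where K: "invariant H \<epsilon> K" "real (card (A\<inter>K)) / real (card K) \<ge> \<gamma>"
    using fH e unfolding S_def by blast
  have "card K > 0" using K(1) inv_card_pos by blast
  hence "real (card (A\<inter>K)) \<ge> \<gamma> * real (card K)" using K(2) by (simp add: le_divide_eq)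
  moreover have "\<gamma> * real (card K) \<ge> (banach_density A - \<delta>) * real (card K)"
    using g(2) by (intro mult_right_mono) auto
  ultimately show ?thesis using K(1) by (meson order_trans)
qed

lemma dens_le1:
  fixes A :: "'a::group_add set"
  assumes am: "amenable TYPE('a)"
  shows "banach_density A \<le> 1"
proof (rule ccontr)
  assume "\<not> banach_density A \<le> 1"
  then obtain K where K: "invariant {} 1 K"
      "real (card (A \<inter> K)) \<ge> (banach_density A - (banach_density A - 1)/2) * real (card K)"
    using dens[OF am, of "{}" 1 "(banach_density A - 1)/2" A] by auto
  have p: "finite K" "card K > 0" using K(1) inv_card_pos by blast+
  have "card (A \<inter> K) \<le> card K" using p by (intro card_mono) auto
  moreover have "(banach_density A - (banach_density A - 1)/2) * real (card K) > real (card K)"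
    using p \<open>\<not> banach_density A \<le> 1\<close> by (simp add: field_simps)
  ultimately show False using K(2) by linarith
qed

definition EE :: "'a::group_add set \<Rightarrow> 'a set \<Rightarrow> 'a \<Rightarrow> 'a set" where
  "EE A B x = {e \<in> A. -e + x \<in> B}"

lemma avg:
  fixes A B :: "'a::group_add set"
  assumes am: "amenable TYPE('a)" and a: "banach_density A = \<alpha>" and b: "banach_density B = \<beta>"
    and ap: "\<alpha> > 0" and bp: "\<beta> > 0" and ep: "\<eta> > 0" and fH: "finite H"
  shows "\<exists>x K. invariant H \<eta> K \<and> real (card (EE A B x \<inter> K)) \<ge> (\<alpha>*\<beta> - \<eta>) * real (card K)"
proof -
  define t where "t = min (\<eta>/3) (min (\<alpha>/2) (\<beta>/4))"
  have tp: "t > 0" using ap bp ep by (simp add: t_def)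
  have a1: "\<alpha> \<le> 1" using dens_le1[OF am, of A] a by simp
  have b1: "\<beta> \<le> 1" using dens_le1[OF am, of B] b by simp
  obtain K where K: "invariant H t K" "real (card (A \<inter> K)) \<ge> (\<alpha> - t) * real (card K)"
    using dens[OF am fH tp tp, of A] a by auto
  have Kp: "finite K" "card K > 0" using K(1) inv_card_pos by blast+
  obtain L where L: "invariant (uminus ` K) t L" "real (card (B \<inter> L)) \<ge> (\<beta> - t) * real (card L)"
    using dens[OF am _ tp tp, of "uminus ` K" B] b Kp by auto
  have Lp: "finite L" "card L > 0" using L(1) inv_card_pos by blast+
  have cnt: "real (card (L \<inter> {x. -e+x \<in> B})) \<ge> (\<beta> - 2*t) * real (card L)" if eK: "e \<in> K" for e
  proof -
    have im: "(\<lambda>x. -e+x) ` (L \<inter> {x. -e+x \<in> B}) = (\<lambda>k. -e+k)`L \<inter> B" by auto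
    have inj: "inj_on (\<lambda>x. -e+x) (L \<inter> {x. -e+x \<in> B})" by (simp add: inj_on_def)
    have c1: "card (L \<inter> {x. -e+x \<in> B}) = card ((\<lambda>k. -e+k)`L \<inter> B)"
      using card_image[OF inj] im by simp
    have "B \<inter> L \<subseteq> ((\<lambda>k. -e+k)`L \<inter> B) \<union> (L - (\<lambda>k. -e+k)`L)" by auto
    hence "card (B \<inter> L) \<le> card (((\<lambda>k. -e+k)`L \<inter> B) \<union> (L - (\<lambda>k. -e+k)`L))"
      using Lp by (intro card_mono) auto
    also have "\<dots> \<le> card ((\<lambda>k. -e+k)`L \<inter> B) + card (L - (\<lambda>k. -e+k)`L)" by (rule card_Un_le)
    finally have c2: "real (card (B \<inter> L)) \<le> real (card ((\<lambda>k. -e+k)`L \<inter> B)) + real (card (L - (\<lambda>k. -e+k)`L))"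
      by linarith
    have "-e \<in> uminus ` K" using eK by auto
    from inv_out(2)[OF L(1) this] have "real (card (L - (\<lambda>k. -e+k)`L)) < t * real (card L)" .
    with c1 c2 L(2) show ?thesis by (simp add: algebra_simps)
  qed
  have swap: "(\<Sum>x\<in>L. real (card (EE A B x \<inter> K))) = (\<Sum>e\<in>A \<inter> K. real (card (L \<inter> {x. -e+x \<in> B})))"
  proof -
    have "(\<Sum>x\<in>L. real (card (EE A B x \<inter> K))) = (\<Sum>x\<in>L. \<Sum>e\<in>A \<inter> K. of_bool (-e+x \<in> B))"
    proof (rule sum.cong[OF refl])
      fix x assume "x \<in> L"
      have "EE A B x \<inter> K = (A \<inter> K) \<inter> {e. -e+x \<in> B}" by (auto simp: EE_def)
      then show "real (card (EE A B x \<inter> K)) = (\<Sum>e\<in>A \<inter> K. of_bool (-e+x \<in> B))"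
        using Kp by simp
    qed
    also have "\<dots> = (\<Sum>e\<in>A \<inter> K. \<Sum>x\<in>L. of_bool (-e+x \<in> B))" by (rule sum.swap)
    also have "\<dots> = (\<Sum>e\<in>A \<inter> K. real (card (L \<inter> {x. -e+x \<in> B})))"
      using Lp by simp
    finally show ?thesis .
  qed
  have "(\<Sum>e\<in>A \<inter> K. real (card (L \<inter> {x. -e+x \<in> B}))) \<ge> (\<Sum>e\<in>A \<inter> K. (\<beta> - 2*t) * real (card L))"
    using cnt by (intro sum_mono) auto
  hence S1: "(\<Sum>x\<in>L. real (card (EE A B x \<inter> K))) \<ge> real (card (A \<inter> K)) * ((\<beta> - 2*t) * real (card L))"
    using swap by simp
  have bt: "\<beta> - 2*t \<ge> 0" using t_def bp by simp
  have "real (card (A \<inter> K)) * ((\<beta> - 2*t) * real (card L)) \<ge> ((\<alpha> - t) * real (card K)) * ((\<beta> - 2*t) * real (card L))"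
    using K(2) bt by (intro mult_right_mono) auto
  moreover have "(\<alpha> - t) * (\<beta> - 2*t) \<ge> \<alpha>*\<beta> - \<eta>"
  proof -
    have "(\<alpha> - t) * (\<beta> - 2*t) = \<alpha>*\<beta> - 2*\<alpha>*t - \<beta>*t + 2*t*t" by (simp add: algebra_simps)
    moreover have "2*\<alpha>*t \<le> 2*t" "\<beta>*t \<le> t" using a1 b1 tp by auto
    moreover have "3*t \<le> \<eta>" using t_def by simp
    moreover have "t*t \<ge> 0" by simp
    ultimately show ?thesis by linarith
  qed
  hence "((\<alpha> - t) * real (card K)) * ((\<beta> - 2*t) * real (card L)) \<ge> ((\<alpha>*\<beta> - \<eta>) * real (card K)) * real (card L)"
  proof -
    assume h: "(\<alpha> - t) * (\<beta> - 2*t) \<ge> \<alpha>*\<beta> - \<eta>"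
    have "((\<alpha> - t) * real (card K)) * ((\<beta> - 2*t) * real (card L)) = ((\<alpha> - t) * (\<beta> - 2*t)) * (real (card K) * real (card L))"
      by (simp add: algebra_simps)
    also have "\<dots> \<ge> (\<alpha>*\<beta> - \<eta>) * (real (card K) * real (card L))"
      using h by (intro mult_right_mono) auto
    finally show ?thesis by (simp add: algebra_simps)
  qed
  ultimately have S2: "(\<Sum>x\<in>L. real (card (EE A B x \<inter> K))) \<ge> ((\<alpha>*\<beta> - \<eta>) * real (card K)) * real (card L)"
    using S1 by linarith
  show ?thesis
  proof (rule ccontr)
    assume "\<not> ?thesis"
    moreover have "invariant H \<eta> K" using inv_mono[OF K(1) subset_refl] t_def ep by simp
    ultimately have lt: "\<And>x. real (card (EE A B x \<inter> K)) < (\<alpha>*\<beta> - \<eta>) * real (card K)" by (meson not_le)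
    have "(\<Sum>x\<in>L. real (card (EE A B x \<inter> K))) < (\<Sum>x\<in>L. (\<alpha>*\<beta> - \<eta>) * real (card K))"
      using Lp lt by (intro sum_strict_mono) auto
    then show False using S2 by (simp add: algebra_simps)
  qed
qed

definition disj :: "'a::group_add set \<Rightarrow> 'a set \<Rightarrow> 'a set \<Rightarrow> 'a \<Rightarrow> bool" where
  "disj A B F x \<longleftrightarrow> (\<forall>f\<in>F. \<forall>g\<in>F. f \<noteq> g \<longrightarrow> (\<lambda>e. f+e) ` EE A B x \<inter> (\<lambda>e. g+e) ` EE A B x = {})"

definition Q :: "'a::group_add set \<Rightarrow> 'a set \<Rightarrow> real \<Rightarrow> 'a set \<Rightarrow> bool" where
  "Q A B c F \<longleftrightarrow> (\<forall>\<eta>>0. \<forall>H. finite H \<longrightarrow> (\<exists>x K. invariant H \<eta> K \<and>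
     real (card (EE A B x \<inter> K)) \<ge> (c - \<eta>) * real (card K) \<and>
     disj A B F x))"

lemma Q_bound:
  assumes q: "Q A B c F" and fF: "finite F"
  shows "real (card F) * c \<le> 1"
proof (rule ccontr)
  assume nc: "\<not> real (card F) * c \<le> 1"
  define n where "n = real (card F)"
  have np: "n > 0" using nc n_def by (cases "card F = 0") auto
  define \<eta> where "\<eta> = (n*c - 1)/(4*n)"
  have ep: "\<eta> > 0" using nc np n_def \<eta>_def by simp
  obtain x K where K: "invariant F \<eta> K" "real (card (EE A B x \<inter> K)) \<ge> (c - \<eta>) * real (card K)"
    "disj A B F x"
    using q fF ep unfolding Q_def by blast
  have Kp: "finite K" "card K > 0" using K(1) inv_card_pos by blast+
  define E where "E = EE A B x"
  have each: "real (card ((\<lambda>e. f+e)`E \<inter> K)) \<ge> (c - 2*\<eta>) * real (card K)" if fF': "f \<in> F" for f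
  proof -
    have "(\<lambda>e. f+e)`(E\<inter>K) \<subseteq> ((\<lambda>e. f+e)`E \<inter> K) \<union> ((\<lambda>k. f+k)`K - K)" by auto
    hence "card ((\<lambda>e. f+e)`(E\<inter>K)) \<le> card (((\<lambda>e. f+e)`E \<inter> K) \<union> ((\<lambda>k. f+k)`K - K))"
      using Kp by (intro card_mono) auto
    also have "\<dots> \<le> card ((\<lambda>e. f+e)`E \<inter> K) + card ((\<lambda>k. f+k)`K - K)" by (rule card_Un_le)
    finally have c1: "card (E\<inter>K) \<le> card ((\<lambda>e. f+e)`E \<inter> K) + card ((\<lambda>k. f+k)`K - K)"
      by (simp add: card_image inj_on_def)
    have "real (card ((\<lambda>k. f+k)`K - K)) < \<eta> * real (card K)" using inv_out(1)[OF K(1) fF'] .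
    with c1 K(2) show ?thesis unfolding E_def by (simp add: algebra_simps)
  qed
  have "(\<Sum>f\<in>F. real (card ((\<lambda>e. f+e)`E \<inter> K))) = real (\<Sum>f\<in>F. card ((\<lambda>e. f+e)`E \<inter> K))" by simp
  also have "(\<Sum>f\<in>F. card ((\<lambda>e. f+e)`E \<inter> K)) = card (\<Union>f\<in>F. (\<lambda>e. f+e)`E \<inter> K)"
    using K(3) Kp fF unfolding E_def disj_def by (intro card_UN_disjoint[symmetric]) auto
  also have "card (\<Union>f\<in>F. (\<lambda>e. f+e)`E \<inter> K) \<le> card K" using Kp by (intro card_mono) auto
  finally have le: "(\<Sum>f\<in>F. real (card ((\<lambda>e. f+e)`E \<inter> K))) \<le> real (card K)" by simp
  have "(\<Sum>f\<in>F. real (card ((\<lambda>e. f+e)`E \<inter> K))) \<ge> (\<Sum>f\<in>F. (c - 2*\<eta>) * real (card K))"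
    using each by (intro sum_mono) auto
  hence "n * ((c - 2*\<eta>) * real (card K)) \<le> real (card K)" using le n_def by simp
  moreover have "n * (c - 2*\<eta>) = (n*c + 1)/2" using np \<eta>_def by (simp add: field_simps)
  moreover have "(n*c+1)/2 > 1" using nc n_def by simp
  ultimately have "real (card K) * ((n*c+1)/2) \<le> real (card K) * 1"
    by (metis mult.assoc mult.commute mult_1_right)
  hence "(n*c+1)/2 \<le> 1" using Kp by (simp add: mult_le_cancel_left_pos)
  thus False using \<open>(n*c+1)/2 > 1\<close> by simp
qed

lemma prod_mem:
  assumes "f \<in> F" "e \<in> EE A B x" "e' \<in> EE A B x" "h + e' = f + e"
  shows "h + x \<in> lmul F (lmul A B)"
proof -
  have eA: "e \<in> A" and bB: "-e' + x \<in> B" using assms(2,3) by (auto simp: EE_def)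
  have "f + (e + (-e' + x)) = (f + e) + (-e' + x)" by (simp add: add.assoc)
  also have "\<dots> = h + x" using assms(4) by (metis add.assoc add_minus_cancel)
  finally have eq: "h + x = f + (e + (-e' + x))" by simp
  have "e + (-e' + x) \<in> lmul A B" unfolding lmul_def using eA bB by blast
  then show ?thesis unfolding lmul_def using eq assms(1) by blast
qed

theorem mainTheorem13:
  fixes A B :: "'a::group_add set" and \<alpha> \<beta> :: real
  assumes "amenable TYPE('a)"
    and "banach_density A = \<alpha>" and "banach_density B = \<beta>"
    and "\<alpha> > 0" and "\<beta> > 0"
  shows "piecewise_syndetic (nat \<lfloor>1 / (\<alpha> * \<beta>)\<rfloor>) (lmul A B)"
proof -
  note am = assms(1)
  define c where "c = \<alpha> * \<beta>"
  have cp: "c > 0" using assms c_def by simp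
  define k where "k = nat \<lfloor>1 / c\<rfloor>"
  define Fam where "Fam = {F. finite F \<and> Q A B c F}"
  have Q0: "Q A B c {0}"
    unfolding Q_def
  proof (intro allI impI)
    fix \<eta> :: real and H :: "'a set" assume "\<eta> > 0" "finite H"
    from avg[OF assms this] obtain x K where
      "invariant H \<eta> K" "real (card (EE A B x \<inter> K)) \<ge> (\<alpha>*\<beta> - \<eta>) * real (card K)" by blast
    moreover have "disj A B {0} x" unfolding disj_def by simp
    ultimately show "\<exists>x K. invariant H \<eta> K \<and> real (card (EE A B x \<inter> K)) \<ge> (c - \<eta>) * real (card K) \<and> disj A B {0} x"
      unfolding c_def by blast
  qed
  have bnd: "card F \<le> k" if "F \<in> Fam" for F
  proof -
    have "real (card F) * c \<le> 1" using Q_bound[of A B c F] that unfolding Fam_def by auto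
    hence "real (card F) \<le> 1 / c" using cp by (simp add: field_simps)
    hence "int (card F) \<le> \<lfloor>1 / c\<rfloor>" by (simp add: le_floor_iff)
    thus ?thesis unfolding k_def using nat_mono[OF \<open>int (card F) \<le> \<lfloor>1 / c\<rfloor>\<close>] by simp
  qed
  have "card ` Fam \<subseteq> {..k}" using bnd by blast
  hence finC: "finite (card ` Fam)" using finite_subset by blast
  have neC: "card ` Fam \<noteq> {}" using Q0 unfolding Fam_def by auto
  obtain F where F: "F \<in> Fam" "card F = Max (card ` Fam)"
    using Max_in[OF finC neC] by auto
  have fF: "finite F" and QF: "Q A B c F" using F(1) unfolding Fam_def by auto
  have maxim: "\<not> Q A B c (insert g F)" if "g \<notin> F" for g
  proof
    assume "Q A B c (insert g F)"
    hence "insert g F \<in> Fam" using fF unfolding Fam_def by auto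
    hence "card (insert g F) \<le> Max (card ` Fam)" using finC by auto
    thus False using F(2) that fF by simp
  qed
  have thick: "thick (lmul F (lmul A B))"
    unfolding thick_def
  proof (intro allI impI)
    fix H0 :: "'a set" assume fH0: "finite H0"
    define S where "S = H0 - F"
    have "\<forall>h\<in>S. \<exists>\<eta>. \<exists>Hh. \<eta> > 0 \<and> finite Hh \<and> (\<forall>x K. invariant Hh \<eta> K \<longrightarrow>
        real (card (EE A B x \<inter> K)) \<ge> (c - \<eta>) * real (card K) \<longrightarrow>
        \<not> disj A B (insert h F) x)"
    proof
      fix h assume "h \<in> S"
      hence "\<not> Q A B c (insert h F)" using maxim S_def by auto
      thus "\<exists>\<eta>. \<exists>Hh. \<eta> > 0 \<and> finite Hh \<and> (\<forall>x K. invariant Hh \<eta> K \<longrightarrow>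
        real (card (EE A B x \<inter> K)) \<ge> (c - \<eta>) * real (card K) \<longrightarrow>
        \<not> disj A B (insert h F) x)"
        unfolding Q_def by blast
    qed
    from bchoice[OF this] obtain \<eta>f where "\<forall>h\<in>S. \<exists>Hh. \<eta>f h > 0 \<and> finite Hh \<and> (\<forall>x K. invariant Hh (\<eta>f h) K \<longrightarrow>
        real (card (EE A B x \<inter> K)) \<ge> (c - \<eta>f h) * real (card K) \<longrightarrow>
        \<not> disj A B (insert h F) x)"
      by blast
    from bchoice[OF this] obtain Hf where HF: "\<forall>h\<in>S. \<eta>f h > 0 \<and> finite (Hf h) \<and> (\<forall>x K. invariant (Hf h) (\<eta>f h) K \<longrightarrow>
        real (card (EE A B x \<inter> K)) \<ge> (c - \<eta>f h) * real (card K) \<longrightarrow>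
        \<not> disj A B (insert h F) x)"
      by blast
    have fS: "finite S" using fH0 S_def by simp
    define \<eta>0 where "\<eta>0 = Min (insert (c/2) (\<eta>f ` S))"
    have e0p: "\<eta>0 > 0" unfolding \<eta>0_def using fS HF cp by (subst Min_gr_iff) auto
    have e0c: "\<eta>0 \<le> c/2" unfolding \<eta>0_def using fS by (intro Min_le) auto
    have e0h: "\<eta>0 \<le> \<eta>f h" if "h \<in> S" for h unfolding \<eta>0_def using fS that by simp
    define H1 where "H1 = \<Union> (Hf ` S)"
    have fH1: "finite H1" unfolding H1_def using fS HF by auto
    obtain x K where K: "invariant H1 \<eta>0 K" "real (card (EE A B x \<inter> K)) \<ge> (c - \<eta>0) * real (card K)"
      "disj A B F x"
      using QF fH1 e0p unfolding Q_def by blast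
    have Kp: "finite K" "card K > 0" using K(1) inv_card_pos by blast+
    show "\<exists>x. (\<lambda>h. h + x) ` H0 \<subseteq> lmul F (lmul A B)"
    proof (intro exI subsetI)
      fix y assume "y \<in> (\<lambda>h. h + x) ` H0"
      then obtain h where hH: "h \<in> H0" and y: "y = h + x" by auto
      show "y \<in> lmul F (lmul A B)"
      proof (cases "h \<in> F")
        case True
        have "(c - \<eta>0) * real (card K) > 0" using e0c cp Kp by simp
        hence "card (EE A B x \<inter> K) > 0" using K(2) by linarith
        then obtain e where "e \<in> EE A B x" by (metis card_gt_0_iff IntE ex_in_conv)
        then show ?thesis using prod_mem[OF True, of e A B x e] y by simp
      next
        case False
        hence hS: "h \<in> S" using hH S_def by simp
        have i: "invariant (Hf h) (\<eta>f h) K"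
          using inv_mono[OF K(1), of "Hf h" "\<eta>f h"] hS e0h H1_def by auto
        have "(c - \<eta>f h) * real (card K) \<le> (c - \<eta>0) * real (card K)"
          using e0h[OF hS] by (intro mult_right_mono) auto
        hence d: "real (card (EE A B x \<inter> K)) \<ge> (c - \<eta>f h) * real (card K)" using K(2) by linarith
        have "\<not> disj A B (insert h F) x"
          using HF hS i d by simp
        then obtain f g where fg: "f \<in> insert h F" "g \<in> insert h F" "f \<noteq> g"
          "(\<lambda>e. f+e) ` EE A B x \<inter> (\<lambda>e. g+e) ` EE A B x \<noteq> {}" unfolding disj_def by blast
        have "\<exists>f'\<in>F. \<exists>e\<in>EE A B x. \<exists>e'\<in>EE A B x. h + e' = f' + e"
        proof (cases "f = h")
          case True
          hence gF: "g \<in> F" using fg by auto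
          from fg(4) obtain e e' where "e \<in> EE A B x" "e' \<in> EE A B x" "f + e' = g + e" by blast
          thus ?thesis using gF True by blast
        next
          case fh: False
          hence fF': "f \<in> F" using fg by auto
          have "g = h" using fh fg K(3) fF' unfolding disj_def by auto
          from fg(4) obtain e e' where "e \<in> EE A B x" "e' \<in> EE A B x" "f + e = g + e'" by blast
          thus ?thesis using fF' \<open>g = h\<close> by metis
        qed
        then show ?thesis using prod_mem y by blast
      qed
    qed
  qed
  have "card F \<le> k" using bnd F(1) by blast
  hence "card F \<le> nat \<lfloor>1 / (\<alpha> * \<beta>)\<rfloor>" unfolding k_def c_def .
  thus ?thesis unfolding piecewise_syndetic_def using fF thick by (intro exI[of _ F]) simp
qed

end
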